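(* Let $W$ be an affine Weyl group, $x\in W$, $n\ge 3$, and let $r_1,\dots,r_n$ be reflections with $H_{r_t}=H_{\alpha,c+t}$ for some root $\alpha$ and $c\in\mathbb{Z}$, such that $\ell(r_t\cdots r_1x)>\ell(r_{t-1}\cdots r_1x)$ for all $1\le t\le n$. Then $x\in H^{\mathbf 1}_{r_t}$, i.e. $\ell(r_tx)>\ell(x)$, for all $1\le t\le n$.
   Context: $W$ is the affine Weyl group of a crystallographic root system $\Phi$; $H_{\beta,k}=\{v:\langle v,\beta\rangle=k\}$ for $\beta\in\Phi$, $k\in\mathbb{Z}$, and the reflections of $W$ are the orthogonal reflections in these hyperplanes; $H_r$ is the hyperplane of reflection $r$. Elements of $W$ are identified with alcoves. $\ell$ is Coxeter length. For a reflection $r$, $H^{\mathbf 1}_r=\{y:\ell(ry)>\ell(y)\}$ (alcoves on the identity side of $H_r$) and $H^\infty_r=\{y:\ell(ry)<\ell(y)\}$. *)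

theory Defs
  imports "HOL-Analysis.Analysis"
begin

definition lin_refl :: "'a::euclidean_space \<Rightarrow> 'a \<Rightarrow> 'a" where
  "lin_refl \<alpha> v = v - ((2 * (v \<bullet> \<alpha>)) / (\<alpha> \<bullet> \<alpha>)) *\<^sub>R \<alpha>"

definition crystallographic_root_system :: "'a::euclidean_space set \<Rightarrow> bool" where
  "crystallographic_root_system \<Phi> \<longleftrightarrow>
     finite \<Phi> \<and> 0 \<notin> \<Phi> \<and> span \<Phi> = UNIV \<and>
     (\<forall>\<alpha>\<in>\<Phi>. \<forall>\<beta>\<in>\<Phi>. lin_refl \<alpha> \<beta> \<in> \<Phi>) \<and>
     (\<forall>\<alpha>\<in>\<Phi>. \<forall>\<beta>\<in>\<Phi>. (2 * (\<beta> \<bullet> \<alpha>)) / (\<alpha> \<bullet> \<alpha>) \<in> \<int>) \<and>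
     (\<forall>\<alpha>\<in>\<Phi>. \<forall>c::real. c *\<^sub>R \<alpha> \<in> \<Phi> \<longrightarrow> c = 1 \<or> c = -1)"

definition hyp :: "'a::euclidean_space \<Rightarrow> int \<Rightarrow> 'a set" where
  "hyp \<beta> k = {v. v \<bullet> \<beta> = of_int k}"

definition aff_refl :: "'a::euclidean_space \<Rightarrow> int \<Rightarrow> 'a \<Rightarrow> 'a" where
  "aff_refl \<beta> k v = v - ((2 * (v \<bullet> \<beta> - of_int k)) / (\<beta> \<bullet> \<beta>)) *\<^sub>R \<beta>"

definition hyps :: "'a::euclidean_space set \<Rightarrow> 'a set set" where
  "hyps \<Phi> = {hyp \<beta> k | \<beta> k. \<beta> \<in> \<Phi>}"

definition alcove :: "'a::euclidean_space set \<Rightarrow> 'a set \<Rightarrow> bool" where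
  "alcove \<Phi> A \<longleftrightarrow> A \<in> components (UNIV - \<Union>(hyps \<Phi>))"

text \<open>The affine Weyl group: the group (of affine maps) generated by the reflections
  in all hyperplanes H_{beta,k}; since these are involutions, it is the closure of the
  identity under left composition with reflections.\<close>
inductive_set affW :: "'a::euclidean_space set \<Rightarrow> ('a \<Rightarrow> 'a) set" for \<Phi> where
  affW_id: "id \<in> affW \<Phi>"
| affW_step: "w \<in> affW \<Phi> \<Longrightarrow> \<beta> \<in> \<Phi> \<Longrightarrow> aff_refl \<beta> k \<circ> w \<in> affW \<Phi>"

definition wall :: "'a::euclidean_space set \<Rightarrow> 'a set \<Rightarrow> 'a set \<Rightarrow> bool" where
  "wall \<Phi> A0 H \<longleftrightarrow> H \<in> hyps \<Phi> \<and>
     (\<exists>p \<in> H \<inter> closure A0. \<exists>e>0. \<forall>H'\<in>hyps \<Phi>. H' \<noteq> H \<longrightarrow> ball p e \<inter> H' = {})"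

definition simple_refls :: "'a::euclidean_space set \<Rightarrow> 'a set \<Rightarrow> ('a \<Rightarrow> 'a) set" where
  "simple_refls \<Phi> A0 = {aff_refl \<beta> k | \<beta> k. \<beta> \<in> \<Phi> \<and> wall \<Phi> A0 (hyp \<beta> k)}"

definition len :: "'a::euclidean_space set \<Rightarrow> 'a set \<Rightarrow> ('a \<Rightarrow> 'a) \<Rightarrow> nat" where
  "len \<Phi> A0 w = (LEAST n. \<exists>ws. length ws = n \<and> set ws \<subseteq> simple_refls \<Phi> A0 \<and> foldr (\<circ>) ws id = w)"

fun refl_chain :: "'a::euclidean_space \<Rightarrow> int \<Rightarrow> nat \<Rightarrow> ('a \<Rightarrow> 'a) \<Rightarrow> ('a \<Rightarrow> 'a)" where
  "refl_chain \<alpha> c 0 x = x"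
| "refl_chain \<alpha> c (Suc t) x = aff_refl \<alpha> (c + int (Suc t)) \<circ> refl_chain \<alpha> c t x"

end

theory Submission
  imports Defs
begin

lemma aff_refl_inner: "aff_refl \<beta> k v \<bullet> \<gamma> = v \<bullet> \<gamma> - (2 * (v \<bullet> \<beta> - of_int k) / (\<beta> \<bullet> \<beta>)) * (\<beta> \<bullet> \<gamma>)"
  by (simp add: aff_refl_def inner_diff_left)

lemma aff_refl_self: "\<beta> \<noteq> 0 \<Longrightarrow> aff_refl \<beta> k v \<bullet> \<beta> - of_int k = - (v \<bullet> \<beta> - of_int k)"
  by (simp add: aff_refl_inner)

lemma aff_refl_invol: "\<beta> \<noteq> 0 \<Longrightarrow> aff_refl \<beta> k (aff_refl \<beta> k v) = v"
proof -
  assume b: "\<beta> \<noteq> 0"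
  define w where "w = aff_refl \<beta> k v"
  have e: "w \<bullet> \<beta> - of_int k = -(v \<bullet> \<beta> - of_int k)" using aff_refl_self[OF b] w_def by simp
  have "aff_refl \<beta> k w = w - ((2 * (w \<bullet> \<beta> - of_int k)) / (\<beta> \<bullet> \<beta>)) *\<^sub>R \<beta>"
    by (rule aff_refl_def)
  also have "\<dots> = w + ((2 * (v \<bullet> \<beta> - of_int k)) / (\<beta> \<bullet> \<beta>)) *\<^sub>R \<beta>"
    by (simp only: e mult_minus_right divide_minus_left scaleR_minus_left diff_minus_eq_add)
  also have "\<dots> = v" by (simp add: w_def aff_refl_def)
  finally show ?thesis by (simp add: w_def)
qed

lemma aff_refl_comp: "\<beta> \<noteq> 0 \<Longrightarrow> aff_refl \<beta> k \<circ> aff_refl \<beta> k = id"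
  by (simp add: fun_eq_iff aff_refl_invol)

lemma aff_refl_diff: "aff_refl \<beta> k u - aff_refl \<beta> k v = lin_refl \<beta> (u - v)"
  by (simp add: aff_refl_def lin_refl_def inner_diff_left algebra_simps diff_divide_distrib)

lemma lin_refl_norm: "\<beta> \<noteq> 0 \<Longrightarrow> norm (lin_refl \<beta> w) = norm w"
proof -
  assume b: "\<beta> \<noteq> 0"
  have q: "\<beta> \<bullet> \<beta> \<noteq> 0" using b by simp
  define c where "c = (2 * (w \<bullet> \<beta>)) / (\<beta> \<bullet> \<beta>)"
  have cc: "c * c * (\<beta> \<bullet> \<beta>) = 2 * c * (w \<bullet> \<beta>)" using q by (simp add: c_def field_simps)
  have "(lin_refl \<beta> w) \<bullet> (lin_refl \<beta> w) = (w - c *\<^sub>R \<beta>) \<bullet> (w - c *\<^sub>R \<beta>)"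
    by (simp add: lin_refl_def c_def)
  also have "\<dots> = w \<bullet> w - 2 * c * (w \<bullet> \<beta>) + c * c * (\<beta> \<bullet> \<beta>)"
    by (simp add: inner_diff_left inner_diff_right inner_commute algebra_simps)
  also have "\<dots> = w \<bullet> w" using cc by simp
  finally show ?thesis by (simp add: norm_eq_sqrt_inner)
qed

lemma aff_refl_dist: "\<beta> \<noteq> 0 \<Longrightarrow> dist (aff_refl \<beta> k u) (aff_refl \<beta> k v) = dist u v"
  by (simp add: dist_norm aff_refl_diff lin_refl_norm)

lemma aff_refl_fix: "\<beta> \<noteq> 0 \<Longrightarrow> aff_refl \<beta> k v = v \<longleftrightarrow> v \<in> hyp \<beta> k"
  by (auto simp: aff_refl_def hyp_def)

lemma aff_refl_segment: "aff_refl \<beta> k ((1 - t) *\<^sub>R u + t *\<^sub>R v) = (1 - t) *\<^sub>R aff_refl \<beta> k u + t *\<^sub>R aff_refl \<beta> k v"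
proof -
  define q where "q = \<beta> \<bullet> \<beta>"
  define a where "a = u \<bullet> \<beta> - of_int k"
  define b where "b = v \<bullet> \<beta> - of_int k"
  have e: "((1 - t) *\<^sub>R u + t *\<^sub>R v) \<bullet> \<beta> - of_int k = (1 - t) * a + t * b"
    by (simp add: a_def b_def inner_add_left algebra_simps)
  have "aff_refl \<beta> k ((1 - t) *\<^sub>R u + t *\<^sub>R v) = ((1 - t) *\<^sub>R u + t *\<^sub>R v) - ((2 * ((1 - t) * a + t * b)) / q) *\<^sub>R \<beta>"
    by (simp only: aff_refl_def e q_def)
  also have "\<dots> = (1 - t) *\<^sub>R (u - ((2 * a) / q) *\<^sub>R \<beta>) + t *\<^sub>R (v - ((2 * b) / q) *\<^sub>R \<beta>)"
  proof -
    have s: "(2 * ((1 - t) * a + t * b)) / q = (1 - t) * ((2 * a) / q) + t * ((2 * b) / q)"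
      by (simp add: divide_inverse algebra_simps)
    show ?thesis by (simp only: s scaleR_add_left scaleR_right_diff_distrib scaleR_scaleR) (simp add: algebra_simps)
  qed
  also have "\<dots> = (1 - t) *\<^sub>R aff_refl \<beta> k u + t *\<^sub>R aff_refl \<beta> k v"
    by (simp add: aff_refl_def a_def b_def q_def)
  finally show ?thesis .
qed


lemma hyp_subset:
  assumes g: "\<gamma> \<noteq> 0" and sub: "hyp \<gamma> m \<subseteq> hyp \<beta> k"
  shows "\<exists>l. \<beta> = l *\<^sub>R \<gamma> \<and> of_int k = l * of_int m"
proof -
  define q where "q = \<gamma> \<bullet> \<gamma>"
  have q: "q \<noteq> 0" using g by (simp add: q_def)
  define v0 where "v0 = (of_int m / q) *\<^sub>R \<gamma>"
  have v0: "v0 \<bullet> \<gamma> = of_int m" using q by (simp add: v0_def q_def)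
  define l where "l = (\<gamma> \<bullet> \<beta>) / q"
  have key: "u \<bullet> \<beta> = u \<bullet> (l *\<^sub>R \<gamma>)" for u
  proof -
    define u' where "u' = u - ((u \<bullet> \<gamma>) / q) *\<^sub>R \<gamma>"
    have u'g: "u' \<bullet> \<gamma> = 0" using q by (simp add: u'_def inner_diff_left q_def)
    have "v0 + u' \<in> hyp \<gamma> m" using v0 u'g by (simp add: hyp_def inner_add_left)
    then have a: "(v0 + u') \<bullet> \<beta> = of_int k" using sub by (auto simp: hyp_def)
    have "v0 \<in> hyp \<gamma> m" using v0 by (simp add: hyp_def)
    then have b: "v0 \<bullet> \<beta> = of_int k" using sub by (auto simp: hyp_def)
    have "u' \<bullet> \<beta> = 0" using a b by (simp add: inner_add_left)
    then have "u \<bullet> \<beta> = ((u \<bullet> \<gamma>) / q) * (\<gamma> \<bullet> \<beta>)" by (simp add: u'_def inner_diff_left)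
    then show ?thesis by (simp add: l_def inner_commute)
  qed
  then have "\<beta> = l *\<^sub>R \<gamma>" using vector_eq_ldot by blast
  moreover have "v0 \<in> hyp \<gamma> m" using v0 by (simp add: hyp_def)
  then have "v0 \<bullet> \<beta> = of_int k" using sub by (auto simp: hyp_def)
  then have "of_int k = l * of_int m" using \<open>\<beta> = l *\<^sub>R \<gamma>\<close> v0 by simp
  ultimately show ?thesis by blast
qed

lemma hyp_eq_refl:
  assumes g: "\<gamma> \<noteq> 0" and b: "\<beta> \<noteq> 0" and e: "hyp \<gamma> m = hyp \<beta> k"
  shows "aff_refl \<gamma> m = aff_refl \<beta> k"
proof -
  obtain l where l: "\<beta> = l *\<^sub>R \<gamma>" "of_int k = l * of_int m" using hyp_subset[OF g] e by blast
  have l0: "l \<noteq> 0" using b l by auto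
  have q: "\<gamma> \<bullet> \<gamma> \<noteq> 0" using g by simp
  show ?thesis
  proof
    fix v
    have sc: "(2 * (v \<bullet> \<beta> - of_int k)) / (\<beta> \<bullet> \<beta>) * l = (2 * (v \<bullet> \<gamma> - of_int m)) / (\<gamma> \<bullet> \<gamma>)"
      using l0 q by (simp add: l field_simps)
    have "aff_refl \<beta> k v = v - ((2 * (v \<bullet> \<beta> - of_int k)) / (\<beta> \<bullet> \<beta>) * l) *\<^sub>R \<gamma>"
      by (simp add: aff_refl_def l(1))
    also have "\<dots> = aff_refl \<gamma> m v" by (simp only: sc aff_refl_def)
    finally show "aff_refl \<gamma> m v = aff_refl \<beta> k v" by simp
  qed
qed

lemma hyp_subset_eq:
  assumes g: "\<gamma> \<noteq> 0" and b: "\<beta> \<noteq> 0" and sub: "hyp \<gamma> m \<subseteq> hyp \<beta> k"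
  shows "hyp \<gamma> m = hyp \<beta> k"
proof -
  obtain l where l: "\<beta> = l *\<^sub>R \<gamma>" "of_int k = l * of_int m" using hyp_subset[OF g sub] by blast
  have "l \<noteq> 0" using b l by auto
  then show ?thesis using l by (auto simp: hyp_def)
qed

lemma aff_refl_inner2: "aff_refl \<beta> k u \<bullet> \<gamma> = u \<bullet> lin_refl \<beta> \<gamma> + ((2 * (\<gamma> \<bullet> \<beta>)) / (\<beta> \<bullet> \<beta>)) * of_int k"
proof -
  have "aff_refl \<beta> k u \<bullet> \<gamma> = u \<bullet> \<gamma> - (2 * (u \<bullet> \<beta>) / (\<beta> \<bullet> \<beta>) - 2 * of_int k / (\<beta> \<bullet> \<beta>)) * (\<beta> \<bullet> \<gamma>)"
    by (simp add: aff_refl_inner diff_divide_distrib)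
  also have "\<dots> = u \<bullet> lin_refl \<beta> \<gamma> + ((2 * (\<gamma> \<bullet> \<beta>)) / (\<beta> \<bullet> \<beta>)) * of_int k"
    by (simp add: lin_refl_def inner_diff_right inner_commute algebra_simps)
  finally show ?thesis .
qed

lemma aff_refl_lin: "aff_refl \<beta> k (w - \<mu> *\<^sub>R \<gamma>) = aff_refl \<beta> k w - \<mu> *\<^sub>R lin_refl \<beta> \<gamma>"
proof -
  define q where "q = \<beta> \<bullet> \<beta>"
  have sc: "(2 * ((w - \<mu> *\<^sub>R \<gamma>) \<bullet> \<beta> - of_int k)) / q = (2 * (w \<bullet> \<beta> - of_int k)) / q - \<mu> * ((2 * (\<gamma> \<bullet> \<beta>)) / q)"
    by (simp add: inner_diff_left divide_inverse algebra_simps)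
  have "aff_refl \<beta> k (w - \<mu> *\<^sub>R \<gamma>) = (w - \<mu> *\<^sub>R \<gamma>) - ((2 * ((w - \<mu> *\<^sub>R \<gamma>) \<bullet> \<beta> - of_int k)) / q) *\<^sub>R \<beta>"
    by (simp add: aff_refl_def q_def)
  also have "\<dots> = (w - ((2 * (w \<bullet> \<beta> - of_int k)) / q) *\<^sub>R \<beta>) - \<mu> *\<^sub>R (\<gamma> - ((2 * (\<gamma> \<bullet> \<beta>)) / q) *\<^sub>R \<beta>)"
    by (simp only: sc scaleR_left_diff_distrib scaleR_right_diff_distrib scaleR_scaleR) (simp add: algebra_simps)
  also have "\<dots> = aff_refl \<beta> k w - \<mu> *\<^sub>R lin_refl \<beta> \<gamma>"
    by (simp add: aff_refl_def lin_refl_def q_def)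
  finally show ?thesis .
qed

lemma aff_refl_image_hyp:
  assumes b: "\<beta> \<noteq> 0" and m': "of_int m' = of_int m - ((2 * (\<gamma> \<bullet> \<beta>)) / (\<beta> \<bullet> \<beta>)) * of_int k"
  shows "aff_refl \<beta> k ` hyp \<gamma> m = hyp (lin_refl \<beta> \<gamma>) m'"
proof -
  have iff: "u \<in> aff_refl \<beta> k ` H \<longleftrightarrow> aff_refl \<beta> k u \<in> H" for u H
    using aff_refl_invol[OF b] by (metis image_iff)
  show ?thesis
    unfolding set_eq_iff iff by (simp add: hyp_def aff_refl_inner2 m' eq_diff_eq)
qed

lemma aff_refl_conj:
  assumes b: "\<beta> \<noteq> 0" and m': "of_int m' = of_int m - ((2 * (\<gamma> \<bullet> \<beta>)) / (\<beta> \<bullet> \<beta>)) * of_int k"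
  shows "aff_refl \<beta> k \<circ> aff_refl \<gamma> m \<circ> aff_refl \<beta> k = aff_refl (lin_refl \<beta> \<gamma>) m'"
proof
  fix v
  define u where "u = aff_refl \<beta> k v"
  have nn: "lin_refl \<beta> \<gamma> \<bullet> lin_refl \<beta> \<gamma> = \<gamma> \<bullet> \<gamma>"
    using lin_refl_norm[OF b, of \<gamma>] by (metis power2_norm_eq_inner)
  have i: "u \<bullet> \<gamma> - of_int m = v \<bullet> lin_refl \<beta> \<gamma> - of_int m'"
    by (simp add: u_def aff_refl_inner2 m')
  have "(aff_refl \<beta> k \<circ> aff_refl \<gamma> m \<circ> aff_refl \<beta> k) v = aff_refl \<beta> k (u - ((2 * (u \<bullet> \<gamma> - of_int m)) / (\<gamma> \<bullet> \<gamma>)) *\<^sub>R \<gamma>)"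
    by (simp add: u_def aff_refl_def[of \<gamma> m])
  also have "\<dots> = v - ((2 * (u \<bullet> \<gamma> - of_int m)) / (\<gamma> \<bullet> \<gamma>)) *\<^sub>R lin_refl \<beta> \<gamma>"
    by (simp add: aff_refl_lin u_def aff_refl_invol[OF b])
  also have "\<dots> = aff_refl (lin_refl \<beta> \<gamma>) m' v"
    by (simp only: i nn aff_refl_def)
  finally show "(aff_refl \<beta> k \<circ> aff_refl \<gamma> m \<circ> aff_refl \<beta> k) v = aff_refl (lin_refl \<beta> \<gamma>) m' v" .
qed


lemma seg_hyp:
  assumes u: "u \<notin> hyp \<beta> k" and v: "v \<notin> hyp \<beta> k"
  shows "closed_segment u v \<inter> hyp \<beta> k \<noteq> {} \<longleftrightarrow> (u \<bullet> \<beta> - of_int k) * (v \<bullet> \<beta> - of_int k) < 0"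
proof
  assume "closed_segment u v \<inter> hyp \<beta> k \<noteq> {}"
  then obtain z where z: "z \<in> closed_segment u v" "z \<bullet> \<beta> = of_int k" by (auto simp: hyp_def)
  show "(u \<bullet> \<beta> - of_int k) * (v \<bullet> \<beta> - of_int k) < 0"
  proof (rule ccontr)
    assume "\<not> ?thesis"
    moreover have "u \<bullet> \<beta> \<noteq> of_int k" "v \<bullet> \<beta> \<noteq> of_int k" using u v by (auto simp: hyp_def)
    ultimately have "(u \<bullet> \<beta> > of_int k \<and> v \<bullet> \<beta> > of_int k) \<or> (u \<bullet> \<beta> < of_int k \<and> v \<bullet> \<beta> < of_int k)"
      by (auto simp: not_less mult_le_0_iff zero_le_mult_iff)
    then show False
    proof
      assume h: "u \<bullet> \<beta> > of_int k \<and> v \<bullet> \<beta> > of_int k"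
      have cv: "convex {x. \<beta> \<bullet> x > of_int k}" by (rule convex_halfspace_gt)
      have "closed_segment u v \<subseteq> {x. \<beta> \<bullet> x > of_int k}"
        by (rule closed_segment_subset[OF _ _ cv]) (use h in \<open>auto simp: inner_commute\<close>)
      then show False using z by (auto simp: inner_commute)
    next
      assume h: "u \<bullet> \<beta> < of_int k \<and> v \<bullet> \<beta> < of_int k"
      have cv: "convex {x. \<beta> \<bullet> x < of_int k}" by (rule convex_halfspace_lt)
      have "closed_segment u v \<subseteq> {x. \<beta> \<bullet> x < of_int k}"
        by (rule closed_segment_subset[OF _ _ cv]) (use h in \<open>auto simp: inner_commute\<close>)
      then show False using z by (auto simp: inner_commute)
    qed
  qed
next
  assume h: "(u \<bullet> \<beta> - of_int k) * (v \<bullet> \<beta> - of_int k) < 0"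
  then have "(u \<bullet> \<beta> \<le> of_int k \<and> of_int k \<le> v \<bullet> \<beta>) \<or> (v \<bullet> \<beta> \<le> of_int k \<and> of_int k \<le> u \<bullet> \<beta>)"
    by (auto simp: mult_less_0_iff)
  then obtain z where "z \<in> closed_segment u v" "\<beta> \<bullet> z = of_int k"
  proof
    assume "u \<bullet> \<beta> \<le> of_int k \<and> of_int k \<le> v \<bullet> \<beta>"
    then show ?thesis using connected_ivt_hyperplane[of "closed_segment u v" u v \<beta> "of_int k"] that
      by (auto simp: inner_commute)
  next
    assume "v \<bullet> \<beta> \<le> of_int k \<and> of_int k \<le> u \<bullet> \<beta>"
    then show ?thesis using connected_ivt_hyperplane[of "closed_segment u v" v u \<beta> "of_int k"] that
      by (auto simp: inner_commute)
  qed
  then show "closed_segment u v \<inter> hyp \<beta> k \<noteq> {}" by (auto simp: hyp_def inner_commute)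
qed

lemma sign3: "(a::real) \<noteq> 0 \<Longrightarrow> b \<noteq> 0 \<Longrightarrow> c \<noteq> 0 \<Longrightarrow> (a * c < 0) \<longleftrightarrow> \<not> ((a * b < 0) \<longleftrightarrow> (b * c < 0))"
  by (cases "a < 0"; cases "b < 0"; cases "c < 0") (simp_all add: mult_less_0_iff)

definition symd :: "'b set \<Rightarrow> 'b set \<Rightarrow> 'b set" where
  "symd A B = (A - B) \<union> (B - A)"

lemma affine_segment_image:
  assumes "\<And>t u v. f ((1 - t) *\<^sub>R u + t *\<^sub>R v) = (1 - t) *\<^sub>R f u + t *\<^sub>R f v"
  shows "f ` closed_segment u v = closed_segment (f u) (f v)"
proof (intro equalityI subsetI)
  fix y assume "y \<in> f ` closed_segment u v"
  then show "y \<in> closed_segment (f u) (f v)" using assms by (auto simp: closed_segment_def)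
next
  fix y assume "y \<in> closed_segment (f u) (f v)"
  then obtain t where t: "0 \<le> t" "t \<le> 1" "y = (1 - t) *\<^sub>R f u + t *\<^sub>R f v" by (auto simp: closed_segment_def)
  then have "y = f ((1 - t) *\<^sub>R u + t *\<^sub>R v)" using assms by simp
  moreover have "(1 - t) *\<^sub>R u + t *\<^sub>R v \<in> closed_segment u v" using t by (auto simp: closed_segment_def)
  ultimately show "y \<in> f ` closed_segment u v" by blast
qed


locale aw =
  fixes \<Phi> :: "'a::euclidean_space set" and A0 :: "'a set"
  assumes crs: "crystallographic_root_system \<Phi>" and alc: "alcove \<Phi> A0"
begin

lemma finPhi: "finite \<Phi>" using crs unfolding crystallographic_root_system_def by blast
lemma zPhi: "0 \<notin> \<Phi>" using crs unfolding crystallographic_root_system_def by blast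
lemma nz: "\<beta> \<in> \<Phi> \<Longrightarrow> \<beta> \<noteq> 0" using zPhi by auto
lemma lin_closed: "\<beta> \<in> \<Phi> \<Longrightarrow> \<gamma> \<in> \<Phi> \<Longrightarrow> lin_refl \<beta> \<gamma> \<in> \<Phi>"
  using crs unfolding crystallographic_root_system_def by blast
lemma integ: "\<beta> \<in> \<Phi> \<Longrightarrow> \<gamma> \<in> \<Phi> \<Longrightarrow> \<exists>c::int. (2 * (\<gamma> \<bullet> \<beta>)) / (\<beta> \<bullet> \<beta>) = of_int c"
proof -
  assume "\<beta> \<in> \<Phi>" "\<gamma> \<in> \<Phi>"
  then have "(2 * (\<gamma> \<bullet> \<beta>)) / (\<beta> \<bullet> \<beta>) \<in> \<int>" using crs unfolding crystallographic_root_system_def by blast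
  then obtain c where "(2 * (\<gamma> \<bullet> \<beta>)) / (\<beta> \<bullet> \<beta>) = of_int c" by (rule Ints_cases)
  then show ?thesis by blast
qed

lemma gen_conj:
  assumes "\<beta> \<in> \<Phi>" "\<gamma> \<in> \<Phi>"
  shows "\<exists>\<gamma>'\<in>\<Phi>. \<exists>m'. aff_refl \<beta> k ` hyp \<gamma> m = hyp \<gamma>' m' \<and> aff_refl \<beta> k \<circ> aff_refl \<gamma> m \<circ> aff_refl \<beta> k = aff_refl \<gamma>' m'"
proof -
  obtain c :: int where c: "(2 * (\<gamma> \<bullet> \<beta>)) / (\<beta> \<bullet> \<beta>) = of_int c" using integ[OF assms] by blast
  define m' where "m' = m - c * k"
  have m': "real_of_int m' = of_int m - ((2 * (\<gamma> \<bullet> \<beta>)) / (\<beta> \<bullet> \<beta>)) * of_int k" by (simp add: m'_def c)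
  show ?thesis
    using aff_refl_image_hyp[OF nz[OF assms(1)] m'] aff_refl_conj[OF nz[OF assms(1)] m'] lin_closed[OF assms] by blast
qed

lemma memHS: "H \<in> hyps \<Phi> \<longleftrightarrow> (\<exists>\<beta> k. \<beta> \<in> \<Phi> \<and> H = hyp \<beta> k)"
  by (auto simp: hyps_def)

lemma refl_img_HS: "\<beta> \<in> \<Phi> \<Longrightarrow> H \<in> hyps \<Phi> \<Longrightarrow> aff_refl \<beta> k ` H \<in> hyps \<Phi>"
proof -
  assume b: "\<beta> \<in> \<Phi>" and H: "H \<in> hyps \<Phi>"
  then obtain \<gamma> m where g: "\<gamma> \<in> \<Phi>" "H = hyp \<gamma> m" by (auto simp: memHS)
  obtain \<gamma>' m' where "\<gamma>' \<in> \<Phi>" "aff_refl \<beta> k ` hyp \<gamma> m = hyp \<gamma>' m'" using gen_conj[OF b g(1)] by blast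
  then show ?thesis using g by (auto simp: memHS)
qed

lemma affW_props:
  assumes "g \<in> affW \<Phi>"
  shows "(\<forall>H \<in> hyps \<Phi>. g ` H \<in> hyps \<Phi>) \<and> (\<forall>H' \<in> hyps \<Phi>. \<exists>H \<in> hyps \<Phi>. H' = g ` H) \<and> inj g
    \<and> (\<forall>t u v. g ((1 - t) *\<^sub>R u + t *\<^sub>R v) = (1 - t) *\<^sub>R g u + t *\<^sub>R g v)"
  using assms
proof induction
  case affW_id
  then show ?case by auto
next
  case (affW_step w \<beta> k)
  let ?r = "aff_refl \<beta> k"
  have bP: "\<beta> \<in> \<Phi>" by fact
  have b: "\<beta> \<noteq> 0" using nz[OF bP] .
  have I1: "\<forall>H\<in>hyps \<Phi>. w ` H \<in> hyps \<Phi>" using affW_step.IH by (rule conjunct1)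
  have I2: "\<forall>H' \<in> hyps \<Phi>. \<exists>H \<in> hyps \<Phi>. H' = w ` H" using affW_step.IH by (elim conjE)
  have I3: "inj w" using affW_step.IH by (elim conjE)
  have I4: "\<forall>t u v. w ((1 - t) *\<^sub>R u + t *\<^sub>R v) = (1 - t) *\<^sub>R w u + t *\<^sub>R w v" using affW_step.IH by (elim conjE)
  have C1: "\<forall>H\<in>hyps \<Phi>. (?r \<circ> w) ` H \<in> hyps \<Phi>"
  proof
    fix H assume "H \<in> hyps \<Phi>"
    then have "w ` H \<in> hyps \<Phi>" using I1 by (rule bspec[rotated])
    then have "?r ` (w ` H) \<in> hyps \<Phi>" by (rule refl_img_HS[OF bP])
    then show "(?r \<circ> w) ` H \<in> hyps \<Phi>" by (simp only: image_comp)
  qed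
  have C2: "\<forall>H'\<in>hyps \<Phi>. \<exists>H\<in>hyps \<Phi>. H' = (?r \<circ> w) ` H"
  proof
    fix H' assume H': "H' \<in> hyps \<Phi>"
    then have "?r ` H' \<in> hyps \<Phi>" by (rule refl_img_HS[OF bP])
    then obtain H where H: "H \<in> hyps \<Phi>" "?r ` H' = w ` H" using I2 by blast
    have rr: "?r \<circ> ?r = id" by (rule aff_refl_comp[OF b])
    have "H' = ?r ` (?r ` H')" by (simp only: image_comp rr image_id id_apply)
    also have "\<dots> = (?r \<circ> w) ` H" by (simp only: H(2) image_comp)
    finally show "\<exists>H\<in>hyps \<Phi>. H' = (?r \<circ> w) ` H" using H(1) by blast
  qed
  have C3: "inj (?r \<circ> w)"
  proof -
    have "inj ?r" by (rule inj_on_inverseI[where g = ?r]) (simp add: aff_refl_invol[OF b])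
    then show ?thesis using I3 by (simp add: inj_compose)
  qed
  have C4: "\<forall>t u v. (?r \<circ> w) ((1 - t) *\<^sub>R u + t *\<^sub>R v) = (1 - t) *\<^sub>R (?r \<circ> w) u + t *\<^sub>R (?r \<circ> w) v"
    using I4 by (simp add: aff_refl_segment)
  show ?case using C1 C2 C3 C4 by (intro conjI)
qed

lemma affW_conj:
  assumes "g \<in> affW \<Phi>" "\<gamma> \<in> \<Phi>"
  shows "\<exists>\<gamma>'\<in>\<Phi>. \<exists>m'. g ` hyp \<gamma> m = hyp \<gamma>' m' \<and> g \<circ> aff_refl \<gamma> m = aff_refl \<gamma>' m' \<circ> g"
  using assms(1)
proof induction
  case affW_id
  then show ?case using assms(2) by auto
next
  case (affW_step w \<beta> k)
  let ?r = "aff_refl \<beta> k"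
  have b: "\<beta> \<noteq> 0" using nz[OF \<open>\<beta> \<in> \<Phi>\<close>] .
  obtain \<gamma>1 m1 where 1: "\<gamma>1 \<in> \<Phi>" "w ` hyp \<gamma> m = hyp \<gamma>1 m1" "w \<circ> aff_refl \<gamma> m = aff_refl \<gamma>1 m1 \<circ> w"
    using affW_step.IH by blast
  obtain \<gamma>2 m2 where 2: "\<gamma>2 \<in> \<Phi>" "?r ` hyp \<gamma>1 m1 = hyp \<gamma>2 m2" "?r \<circ> aff_refl \<gamma>1 m1 \<circ> ?r = aff_refl \<gamma>2 m2"
    using gen_conj[OF \<open>\<beta> \<in> \<Phi>\<close> 1(1)] by blast
  have "(?r \<circ> w) ` hyp \<gamma> m = ?r ` (w ` hyp \<gamma> m)" by (simp only: image_comp)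
  then have "(?r \<circ> w) ` hyp \<gamma> m = hyp \<gamma>2 m2" using 1(2) 2(2) by simp
  moreover have "(?r \<circ> w) \<circ> aff_refl \<gamma> m = aff_refl \<gamma>2 m2 \<circ> (?r \<circ> w)"
  proof -
    have "(?r \<circ> w) \<circ> aff_refl \<gamma> m = ?r \<circ> aff_refl \<gamma>1 m1 \<circ> w" using 1 by (simp add: comp_assoc)
    also have "\<dots> = (?r \<circ> aff_refl \<gamma>1 m1 \<circ> ?r) \<circ> (?r \<circ> w)"
      by (simp add: fun_eq_iff aff_refl_invol[OF b])
    finally show ?thesis using 2 by simp
  qed
  ultimately show ?case using 2 by blast
qed

definition himg :: "('a \<Rightarrow> 'a) \<Rightarrow> 'a set set \<Rightarrow> 'a set set" where
  "himg g X = (\<lambda>H. g ` H) ` X"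

definition gen :: "'a \<Rightarrow> bool" where "gen v \<longleftrightarrow> (\<forall>H \<in> hyps \<Phi>. v \<notin> H)"
definition sep :: "'a \<Rightarrow> 'a \<Rightarrow> 'a set set" where
  "sep u v = {H \<in> hyps \<Phi>. closed_segment u v \<inter> H \<noteq> {}}"

lemma hyp_in: "\<beta> \<in> \<Phi> \<Longrightarrow> hyp \<beta> k \<in> hyps \<Phi>" by (auto simp: memHS)

lemma gen_hyp: "gen v \<Longrightarrow> \<beta> \<in> \<Phi> \<Longrightarrow> v \<bullet> \<beta> - of_int k \<noteq> 0"
  using hyp_in[of \<beta> k] by (auto simp: gen_def hyp_def)

lemma affW_gen: "g \<in> affW \<Phi> \<Longrightarrow> gen v \<Longrightarrow> gen (g v)"
proof (induction rule: affW.induct)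
  case affW_id
  then show ?case by simp
next
  case (affW_step w \<beta> k)
  have b: "\<beta> \<noteq> 0" using nz[OF \<open>\<beta> \<in> \<Phi>\<close>] .
  show ?case unfolding gen_def
  proof
    fix H assume H: "H \<in> hyps \<Phi>"
    show "(aff_refl \<beta> k \<circ> w) v \<notin> H"
    proof
      assume "(aff_refl \<beta> k \<circ> w) v \<in> H"
      then have "w v \<in> aff_refl \<beta> k ` H" using aff_refl_invol[OF b] by (metis comp_apply image_eqI)
      then show False using affW_step refl_img_HS[OF \<open>\<beta> \<in> \<Phi>\<close> H, of k] by (auto simp: gen_def)
    qed
  qed
qed

lemma affW_sep: assumes g: "g \<in> affW \<Phi>" shows "sep (g u) (g v) = himg g (sep u v)"
proof -
  note P = affW_props[OF g]
  have seg: "g ` closed_segment u v = closed_segment (g u) (g v)"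
    by (rule affine_segment_image) (use P in blast)
  show ?thesis
  proof (intro equalityI subsetI)
    fix H' assume "H' \<in> sep (g u) (g v)"
    then have H': "H' \<in> hyps \<Phi>" "closed_segment (g u) (g v) \<inter> H' \<noteq> {}" by (auto simp: sep_def)
    then obtain H where H: "H \<in> hyps \<Phi>" "H' = g ` H" using P by blast
    have "g ` (closed_segment u v \<inter> H) = closed_segment (g u) (g v) \<inter> H'"
      using P H seg by (simp add: image_Int)
    then have "closed_segment u v \<inter> H \<noteq> {}" using H' by auto
    then show "H' \<in> himg g (sep u v)" using H by (auto simp: sep_def himg_def)
  next
    fix H' assume "H' \<in> himg g (sep u v)"
    then obtain H where "H \<in> sep u v" "H' = g ` H" by (auto simp: himg_def)
    then have H: "H \<in> hyps \<Phi>" "closed_segment u v \<inter> H \<noteq> {}" "H' = g ` H" by (auto simp: sep_def)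
    have "g ` (closed_segment u v \<inter> H) = closed_segment (g u) (g v) \<inter> g ` H"
      using P seg by (simp add: image_Int)
    then show "H' \<in> sep (g u) (g v)" using H P by (auto simp: sep_def)
  qed
qed

lemma sep_sym: "sep u v = sep v u" by (simp add: sep_def closed_segment_commute)

lemma sep_refl: "gen u \<Longrightarrow> sep u u = {}" by (auto simp: sep_def gen_def)

lemma sep_hyp: "gen u \<Longrightarrow> gen v \<Longrightarrow> \<beta> \<in> \<Phi> \<Longrightarrow>
   hyp \<beta> k \<in> sep u v \<longleftrightarrow> (u \<bullet> \<beta> - of_int k) * (v \<bullet> \<beta> - of_int k) < 0"
proof -
  assume u: "gen u" and v: "gen v" and b: "\<beta> \<in> \<Phi>"
  have h: "hyp \<beta> k \<in> hyps \<Phi>" using b by (auto simp: memHS)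
  then have "u \<notin> hyp \<beta> k" "v \<notin> hyp \<beta> k" using u v by (auto simp: gen_def)
  then show ?thesis using seg_hyp h by (simp add: sep_def)
qed

lemma sep_delta: assumes "gen u" "gen v" "gen w" shows "sep u w = symd (sep u v) (sep v w)"
proof -
  have "H \<in> sep u w \<longleftrightarrow> H \<in> symd (sep u v) (sep v w)" for H
  proof (cases "H \<in> hyps \<Phi>")
    case True
    then obtain \<beta> k where bk: "\<beta> \<in> \<Phi>" "H = hyp \<beta> k" by (auto simp: memHS)
    note s3 = sign3[OF gen_hyp[OF assms(1) bk(1)] gen_hyp[OF assms(2) bk(1)] gen_hyp[OF assms(3) bk(1)]]
    note e1 = sep_hyp[OF assms(1) assms(3) bk(1)] and e2 = sep_hyp[OF assms(1) assms(2) bk(1)] and e3 = sep_hyp[OF assms(2) assms(3) bk(1)]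
    show ?thesis unfolding bk(2) symd_def using s3 e1 e2 e3 by blast
  next
    case False
    then show ?thesis by (auto simp: sep_def symd_def)
  qed
  then show ?thesis by blast
qed

lemma sep_finite: "finite (sep u v)"
proof -
  define N where "N \<beta> = \<lceil>\<bar>u \<bullet> \<beta>\<bar> + \<bar>v \<bullet> \<beta>\<bar>\<rceil>" for \<beta>
  have "sep u v \<subseteq> (\<Union>\<beta>\<in>\<Phi>. (\<lambda>k. hyp \<beta> k) ` {-N \<beta>..N \<beta>})"
  proof
    fix H assume "H \<in> sep u v"
    then obtain \<beta> k z where bk: "\<beta> \<in> \<Phi>" "H = hyp \<beta> k" "z \<in> closed_segment u v" "z \<bullet> \<beta> = of_int k"
      by (auto simp: sep_def memHS hyp_def)
    obtain t where t: "0 \<le> t" "t \<le> 1" "z = (1 - t) *\<^sub>R u + t *\<^sub>R v" using bk(3) by (auto simp: closed_segment_def)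
    have "z \<bullet> \<beta> = (1 - t) * (u \<bullet> \<beta>) + t * (v \<bullet> \<beta>)" by (simp add: t(3) inner_add_left)
    then have "\<bar>z \<bullet> \<beta>\<bar> \<le> (1 - t) * \<bar>u \<bullet> \<beta>\<bar> + t * \<bar>v \<bullet> \<beta>\<bar>"
      using t abs_triangle_ineq[of "(1 - t) * (u \<bullet> \<beta>)" "t * (v \<bullet> \<beta>)"] by (simp add: abs_mult)
    also have "\<dots> \<le> \<bar>u \<bullet> \<beta>\<bar> + \<bar>v \<bullet> \<beta>\<bar>" using t
      by (smt (verit, ccfv_SIG) abs_ge_zero mult_left_le_one_le mult_nonneg_nonneg)
    finally have "\<bar>of_int k\<bar> \<le> \<bar>u \<bullet> \<beta>\<bar> + \<bar>v \<bullet> \<beta>\<bar>" using bk(4) by simp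
    then have "\<bar>k\<bar> \<le> N \<beta>" unfolding N_def by linarith
    then have "k \<in> {-N \<beta>..N \<beta>}" by auto
    then show "H \<in> (\<Union>\<beta>\<in>\<Phi>. (\<lambda>k. hyp \<beta> k) ` {-N \<beta>..N \<beta>})" using bk by blast
  qed
  then show ?thesis by (rule finite_subset) (simp add: finPhi)
qed

lemma A0_comp: "A0 \<in> components (UNIV - \<Union>(hyps \<Phi>))" using alc by (simp add: alcove_def)
lemma A0_conn: "connected A0" using A0_comp in_components_connected by blast
lemma A0_ne: "A0 \<noteq> {}" using A0_comp in_components_nonempty by blast
lemma A0_gen: "a \<in> A0 \<Longrightarrow> gen a" using in_components_subset[OF A0_comp] by (auto simp: gen_def)

lemma sep_A0: assumes "a \<in> A0" "b \<in> A0" shows "sep a b = {}"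
proof (rule ccontr)
  assume "sep a b \<noteq> {}"
  then obtain \<beta> k where bk: "\<beta> \<in> \<Phi>" "hyp \<beta> k \<in> sep a b" by (auto simp: sep_def memHS)
  then have "(a \<bullet> \<beta> - of_int k) * (b \<bullet> \<beta> - of_int k) < 0" using sep_hyp A0_gen assms by blast
  then have "(a \<bullet> \<beta> \<le> of_int k \<and> of_int k \<le> b \<bullet> \<beta>) \<or> (b \<bullet> \<beta> \<le> of_int k \<and> of_int k \<le> a \<bullet> \<beta>)"
    by (auto simp: mult_less_0_iff)
  then obtain z where "z \<in> A0" "\<beta> \<bullet> z = of_int k"
    using connected_ivt_hyperplane[OF A0_conn assms(1) assms(2), of \<beta> "of_int k"]
      connected_ivt_hyperplane[OF A0_conn assms(2) assms(1), of \<beta> "of_int k"]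
    by (auto simp: inner_commute)
  then show False using A0_gen[of z] hyp_in[OF bk(1), of k] by (auto simp: gen_def hyp_def inner_commute)
qed

end


lemma symd_empty[simp]: "symd {} X = X" "symd X {} = X" by (auto simp: symd_def)

lemma card_symd_le: "finite A \<Longrightarrow> finite B \<Longrightarrow> card (symd A B) \<le> card A + card B"
proof -
  assume "finite A" "finite B"
  then have "card (symd A B) \<le> card (A \<union> B)" by (intro card_mono) (auto simp: symd_def)
  also have "\<dots> \<le> card A + card B" by (rule card_Un_le)
  finally show ?thesis .
qed

context aw
begin

definition a0 :: 'a where "a0 = (SOME a. a \<in> A0)"
lemma a0_in: "a0 \<in> A0" unfolding a0_def using A0_ne by (simp add: some_in_eq)
lemma a0_gen: "gen a0" using A0_gen a0_in by blast

definition N :: "('a \<Rightarrow> 'a) \<Rightarrow> 'a set set" where "N w = sep a0 (w a0)"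

lemma N_finite: "finite (N w)" by (simp add: N_def sep_finite)

definition Hs :: "('a \<Rightarrow> 'a) \<Rightarrow> 'a set" where "Hs s = {v. s v = v}"

lemma Hs_refl: "\<gamma> \<in> \<Phi> \<Longrightarrow> Hs (aff_refl \<gamma> m) = hyp \<gamma> m"
  using aff_refl_fix[OF nz] by (auto simp: Hs_def)

lemma simpleE:
  assumes "s \<in> simple_refls \<Phi> A0"
  obtains \<gamma> m where "\<gamma> \<in> \<Phi>" "s = aff_refl \<gamma> m" "wall \<Phi> A0 (hyp \<gamma> m)"
  using assms by (auto simp: simple_refls_def)

lemma refl_affW: "\<beta> \<in> \<Phi> \<Longrightarrow> g \<in> affW \<Phi> \<Longrightarrow> aff_refl \<beta> k \<circ> g \<in> affW \<Phi>"
  by (rule affW_step)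

lemma refl_affW1: "\<beta> \<in> \<Phi> \<Longrightarrow> aff_refl \<beta> k \<in> affW \<Phi>"
  using refl_affW[OF _ affW_id] by simp

lemma simple_affW: "s \<in> simple_refls \<Phi> A0 \<Longrightarrow> g \<in> affW \<Phi> \<Longrightarrow> s \<circ> g \<in> affW \<Phi>"
  by (erule simpleE) (simp add: refl_affW)

lemma simple_affW1: "s \<in> simple_refls \<Phi> A0 \<Longrightarrow> s \<in> affW \<Phi>"
  using simple_affW[OF _ affW_id] by simp

lemma simple_invol: "s \<in> simple_refls \<Phi> A0 \<Longrightarrow> s (s v) = v"
  by (erule simpleE) (simp add: aff_refl_invol nz)

lemma refl_prod_neg: "\<beta> \<noteq> 0 \<Longrightarrow> (a \<bullet> \<beta> - of_int k) * (aff_refl \<beta> k a \<bullet> \<beta> - of_int k) = - ((a \<bullet> \<beta> - of_int k) * (a \<bullet> \<beta> - of_int k))"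
proof -
  assume b: "\<beta> \<noteq> 0"
  show ?thesis by (simp only: aff_refl_self[OF b] mult_minus_right)
qed

lemma sep_simple:
  assumes s: "s \<in> simple_refls \<Phi> A0"
  shows "sep a0 (s a0) = {Hs s}"
proof -
  obtain \<gamma> m where g: "\<gamma> \<in> \<Phi>" "s = aff_refl \<gamma> m" "wall \<Phi> A0 (hyp \<gamma> m)" using s by (rule simpleE)
  let ?H = "hyp \<gamma> m"
  have Hs: "Hs s = ?H" using Hs_refl g by simp
  obtain p e where pe: "p \<in> ?H" "p \<in> closure A0" "e > 0" "\<forall>H'\<in>hyps \<Phi>. H' \<noteq> ?H \<longrightarrow> ball p e \<inter> H' = {}"
    using g(3) unfolding wall_def by blast
  obtain a where a: "a \<in> A0" "dist a p < e" using pe(2,3) closure_approachable by blast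
  have sp: "s p = p" using pe(1) aff_refl_fix[OF nz[OF g(1)]] g(2) by simp
  have "dist (s a) p = dist a p" using aff_refl_dist[OF nz[OF g(1)]] sp g(2) by metis
  then have inb: "a \<in> ball p e" "s a \<in> ball p e" using a by (auto simp: dist_commute)
  have seg: "closed_segment a (s a) \<subseteq> ball p e" by (rule closed_segment_subset[OF inb convex_ball])
  have ga: "gen a" using A0_gen a(1) by blast
  have gsa: "gen (s a)" using affW_gen[OF simple_affW1[OF s] ga] .
  have gsa0: "gen (s a0)" using affW_gen[OF simple_affW1[OF s] a0_gen] .
  have sep1: "sep a (s a) = {?H}"
  proof (intro equalityI subsetI)
    fix H' assume H': "H' \<in> sep a (s a)"
    then have "H' \<in> hyps \<Phi>" "closed_segment a (s a) \<inter> H' \<noteq> {}" by (auto simp: sep_def)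
    then show "H' \<in> {?H}" using pe(4) seg by blast
  next
    fix H' assume "H' \<in> {?H}"
    then have "H' = ?H" by simp
    moreover have "?H \<in> sep a (s a)"
    proof -
      have "(a \<bullet> \<gamma> - of_int m) \<noteq> 0" using gen_hyp[OF ga g(1)] .
      then have "(a \<bullet> \<gamma> - of_int m) * (a \<bullet> \<gamma> - of_int m) > 0" by (auto simp: zero_less_mult_iff linorder_neq_iff)
      then show ?thesis using sep_hyp[OF ga gsa g(1)] refl_prod_neg[OF nz[OF g(1)], of a m] g(2) by simp
    qed
    ultimately show "H' \<in> sep a (s a)" by simp
  qed
  have sep2: "sep (s a) (s a0) = {}"
    using affW_sep[OF simple_affW1[OF s], of a a0] sep_A0[OF a(1) a0_in] by (simp add: himg_def)
  have "sep a0 (s a0) = symd (sep a0 a) (sep a (s a0))" by (rule sep_delta[OF a0_gen ga gsa0])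
  also have "sep a (s a0) = symd (sep a (s a)) (sep (s a) (s a0))" by (rule sep_delta[OF ga gsa gsa0])
  finally show ?thesis using sep1 sep2 sep_A0[OF a0_in a(1)] Hs by simp
qed

lemma N_left:
  assumes s: "s \<in> simple_refls \<Phi> A0" and w: "w \<in> affW \<Phi>"
  shows "N (s \<circ> w) = symd {Hs s} (himg s (N w))"
proof -
  have g1: "gen (s a0)" using affW_gen[OF simple_affW1[OF s] a0_gen] .
  have g2: "gen (s (w a0))" using affW_gen[OF simple_affW[OF s w] a0_gen] by simp
  have "N (s \<circ> w) = symd (sep a0 (s a0)) (sep (s a0) (s (w a0)))"
    unfolding N_def by (simp add: sep_delta[OF a0_gen g1 g2])
  also have "\<dots> = symd {Hs s} (himg s (N w))"
    using sep_simple[OF s] affW_sep[OF simple_affW1[OF s]] by (simp add: N_def)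
  finally show ?thesis .
qed

lemma N_right:
  assumes s: "s \<in> simple_refls \<Phi> A0" and w: "w \<in> affW \<Phi>"
  shows "N (w \<circ> s) = symd (N w) {w ` Hs s}"
proof -
  have g1: "gen (w a0)" using affW_gen[OF w a0_gen] .
  have g2: "gen (w (s a0))" using affW_gen[OF w affW_gen[OF simple_affW1[OF s] a0_gen]] .
  have "N (w \<circ> s) = symd (sep a0 (w a0)) (sep (w a0) (w (s a0)))"
    unfolding N_def by (simp add: sep_delta[OF a0_gen g1 g2])
  also have "\<dots> = symd (N w) {w ` Hs s}"
    using sep_simple[OF s] affW_sep[OF w, of a0 "s a0"] by (simp add: N_def himg_def)
  finally show ?thesis .
qed

definition word :: "('a \<Rightarrow> 'a) list \<Rightarrow> bool" where "word ws \<longleftrightarrow> set ws \<subseteq> simple_refls \<Phi> A0"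
definition ev :: "('a \<Rightarrow> 'a) list \<Rightarrow> ('a \<Rightarrow> 'a)" where "ev ws = foldr (\<circ>) ws id"

lemma ev_Nil[simp]: "ev [] = id" by (simp add: ev_def)
lemma ev_Cons[simp]: "ev (s # ws) = s \<circ> ev ws" by (simp add: ev_def)
lemma ev_append[simp]: "ev (xs @ ys) = ev xs \<circ> ev ys"
  by (induction xs) (simp_all add: comp_assoc)

lemma word_Cons[simp]: "word (s # ws) \<longleftrightarrow> s \<in> simple_refls \<Phi> A0 \<and> word ws" by (simp add: word_def)
lemma word_append[simp]: "word (xs @ ys) \<longleftrightarrow> word xs \<and> word ys" by (auto simp: word_def)
lemma word_Nil[simp]: "word []" by (simp add: word_def)

lemma ev_affW: "word ws \<Longrightarrow> ev ws \<in> affW \<Phi>"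
  by (induction ws) (simp_all add: affW_id simple_affW)

definition wspan :: "('a \<Rightarrow> 'a) list \<Rightarrow> 'a set set" where
  "wspan ws = {ev (take i ws) ` Hs (ws ! i) | i. i < length ws}"

lemma N_span: "word ws \<Longrightarrow> N (ev ws) \<subseteq> wspan ws"
proof (induction ws rule: rev_induct)
  case Nil
  then show ?case using sep_refl[OF a0_gen] by (simp add: N_def)
next
  case (snoc s ws)
  have s: "s \<in> simple_refls \<Phi> A0" and w: "word ws" using snoc.prems by auto
  have "N (ev (ws @ [s])) = symd (N (ev ws)) {ev ws ` Hs s}"
    using N_right[OF s ev_affW[OF w]] by simp
  also have "\<dots> \<subseteq> N (ev ws) \<union> {ev ws ` Hs s}" by (auto simp: symd_def)
  also have "\<dots> \<subseteq> wspan (ws @ [s])"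
  proof -
    have "wspan ws \<subseteq> wspan (ws @ [s])"
    proof
      fix X assume "X \<in> wspan ws"
      then obtain i where "i < length ws" "X = ev (take i ws) ` Hs (ws ! i)" by (auto simp: wspan_def)
      then show "X \<in> wspan (ws @ [s])" unfolding wspan_def
        by (intro CollectI exI[of _ i]) (simp add: nth_append)
    qed
    moreover have "ev ws ` Hs s \<in> wspan (ws @ [s])" unfolding wspan_def
      by (intro CollectI exI[of _ "length ws"]) simp
    ultimately show ?thesis using snoc.IH[OF w] by blast
  qed
  finally show ?case .
qed

lemma deletion:
  assumes w: "word ws" and b: "\<beta> \<in> \<Phi>" and h: "hyp \<beta> k \<in> wspan ws"
  shows "\<exists>ws'. word ws' \<and> length ws' < length ws \<and> ev ws' = aff_refl \<beta> k \<circ> ev ws"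
proof -
  obtain i where i: "i < length ws" "hyp \<beta> k = ev (take i ws) ` Hs (ws ! i)" using h by (auto simp: wspan_def)
  define P where "P = ev (take i ws)"
  define Q where "Q = ev (drop (Suc i) ws)"
  define s where "s = ws ! i"
  have ws: "ws = take i ws @ s # drop (Suc i) ws" using i(1) by (simp add: s_def id_take_nth_drop)
  have s: "s \<in> simple_refls \<Phi> A0" using w i(1) by (auto simp: word_def s_def)
  obtain \<gamma> m where g: "\<gamma> \<in> \<Phi>" "s = aff_refl \<gamma> m" using s by (rule simpleE)
  have wP: "word (take i ws)" using w by (auto simp: word_def dest: in_set_takeD)
  have wQ: "word (drop (Suc i) ws)" using w by (auto simp: word_def dest: in_set_dropD)
  obtain \<gamma>' m' where c: "\<gamma>' \<in> \<Phi>" "P ` hyp \<gamma> m = hyp \<gamma>' m'" "P \<circ> aff_refl \<gamma> m = aff_refl \<gamma>' m' \<circ> P"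
    using affW_conj[OF ev_affW[OF wP] g(1)] unfolding P_def by blast
  have "hyp \<gamma>' m' = hyp \<beta> k" using i(2) c(2) Hs_refl[OF g(1)] g(2) by (simp add: P_def s_def)
  then have r: "aff_refl \<gamma>' m' = aff_refl \<beta> k" by (rule hyp_eq_refl[OF nz[OF c(1)] nz[OF b]])
  have evws: "ev ws = P \<circ> s \<circ> Q" by (subst ws) (simp add: P_def Q_def comp_assoc)
  have "aff_refl \<beta> k \<circ> ev ws = (aff_refl \<beta> k \<circ> P) \<circ> s \<circ> Q" by (simp add: evws comp_assoc)
  also have "\<dots> = P \<circ> s \<circ> s \<circ> Q" using c(3) r g(2) by simp
  also have "\<dots> = P \<circ> Q" using simple_invol[OF s] by (simp add: fun_eq_iff)
  finally have e: "aff_refl \<beta> k \<circ> ev ws = ev (take i ws @ drop (Suc i) ws)" by (simp add: P_def Q_def)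
  have "length (take i ws @ drop (Suc i) ws) < length ws" using i(1) by simp
  then show ?thesis using e wP wQ by (intro exI[of _ "take i ws @ drop (Suc i) ws"]) simp
qed

end


lemma interior_Union_empty:
  assumes "finite F" "\<And>T. T \<in> F \<Longrightarrow> closed T" "\<And>T. T \<in> F \<Longrightarrow> interior T = {}"
  shows "interior (\<Union>F) = {}"
  using assms
proof (induction F rule: finite_induct)
  case empty
  then show ?case by simp
next
  case (insert T F)
  have "interior (T \<union> \<Union>F) = interior T"
    by (rule interior_closed_Un_empty_interior) (use insert in auto)
  then show ?case using insert by simp
qed

lemma int_near_finite: "finite {k::int. \<bar>(x::real) - of_int k\<bar> < 1}"
proof -
  have "{k::int. \<bar>x - of_int k\<bar> < 1} \<subseteq> {\<lfloor>x\<rfloor> - 1 .. \<lfloor>x\<rfloor> + 1}"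
  proof
    fix k :: int assume "k \<in> {k::int. \<bar>x - of_int k\<bar> < 1}"
    then have k: "of_int k - 1 < x" "x < of_int k + 1" by auto
    have "k - 1 \<le> \<lfloor>x\<rfloor>" using k(1) by (simp add: le_floor_iff)
    moreover have "\<lfloor>x\<rfloor> < k + 1" by (subst floor_less_iff) (use k(2) in simp)
    ultimately show "k \<in> {\<lfloor>x\<rfloor> - 1 .. \<lfloor>x\<rfloor> + 1}" by auto
  qed
  then show ?thesis by (rule finite_subset) simp
qed

context aw
begin

lemma LF: "\<exists>e>0. \<forall>\<beta>\<in>\<Phi>. \<forall>k::int. p \<bullet> \<beta> \<noteq> of_int k \<longrightarrow> ball p e \<inter> hyp \<beta> k = {}"
proof -
  define F where "F = {(\<beta>, k::int). \<beta> \<in> \<Phi> \<and> \<bar>p \<bullet> \<beta> - of_int k\<bar> < 1 \<and> p \<bullet> \<beta> \<noteq> of_int k}"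
  have "F \<subseteq> (\<Union>\<beta>\<in>\<Phi>. {\<beta>} \<times> {k::int. \<bar>p \<bullet> \<beta> - of_int k\<bar> < 1})" by (auto simp: F_def)
  moreover have "finite (\<Union>\<beta>\<in>\<Phi>. {\<beta>} \<times> {k::int. \<bar>p \<bullet> \<beta> - of_int k\<bar> < 1})"
    using finPhi int_near_finite by blast
  ultimately have fF: "finite F" by (rule finite_subset)
  define D where "D = Min (insert 1 ((\<lambda>(\<beta>, k). \<bar>p \<bullet> \<beta> - of_int k\<bar>) ` F))"
  have D0: "D > 0" unfolding D_def using fF by (auto simp: F_def)
  have D1: "D \<le> 1" unfolding D_def using fF by simp
  have DF: "D \<le> \<bar>p \<bullet> \<beta> - of_int k\<bar>" if "(\<beta>, k) \<in> F" for \<beta> k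
    unfolding D_def using fF that by (intro Min_le) auto
  define M where "M = Max (insert 1 (norm ` \<Phi>))"
  have M1: "M \<ge> 1" unfolding M_def using finPhi by simp
  have Mb: "norm \<beta> \<le> M" if "\<beta> \<in> \<Phi>" for \<beta> unfolding M_def using finPhi that by simp
  define e where "e = D / M"
  have e0: "e > 0" using D0 M1 by (simp add: e_def)
  have "\<forall>\<beta>\<in>\<Phi>. \<forall>k::int. p \<bullet> \<beta> \<noteq> of_int k \<longrightarrow> ball p e \<inter> hyp \<beta> k = {}"
  proof (intro ballI allI impI)
    fix \<beta> k assume b: "\<beta> \<in> \<Phi>" and pk: "p \<bullet> \<beta> \<noteq> of_int k"
    show "ball p e \<inter> hyp \<beta> k = {}"
    proof (rule ccontr)
      assume "ball p e \<inter> hyp \<beta> k \<noteq> {}"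
      then obtain v where v: "dist p v < e" "v \<bullet> \<beta> = of_int k" by (auto simp: hyp_def)
      have nb: "norm \<beta> > 0" using nz[OF b] by simp
      have "\<bar>p \<bullet> \<beta> - of_int k\<bar> = \<bar>(p - v) \<bullet> \<beta>\<bar>" using v(2) by (simp add: inner_diff_left)
      also have "\<dots> \<le> norm (p - v) * norm \<beta>" by (rule Cauchy_Schwarz_ineq2)
      also have "\<dots> < e * norm \<beta>" using v(1) nb by (simp add: dist_norm)
      also have "\<dots> \<le> e * M" using Mb[OF b] e0 by simp
      also have "\<dots> = D" using M1 by (simp add: e_def)
      finally have lt: "\<bar>p \<bullet> \<beta> - of_int k\<bar> < D" .
      show False
      proof (cases "\<bar>p \<bullet> \<beta> - of_int k\<bar> < 1")
        case True
        then have "(\<beta>, k) \<in> F" using b pk by (simp add: F_def)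
        then show False using DF lt by fastforce
      next
        case False
        then show False using lt D1 by simp
      qed
    qed
  qed
  then show ?thesis using e0 by blast
qed

lemma ball_A0: "\<exists>\<rho>>0. ball a0 \<rho> \<subseteq> A0"
proof -
  obtain \<rho> where r: "\<rho> > 0" "\<forall>\<beta>\<in>\<Phi>. \<forall>k::int. a0 \<bullet> \<beta> \<noteq> of_int k \<longrightarrow> ball a0 \<rho> \<inter> hyp \<beta> k = {}"
    using LF by blast
  have "ball a0 \<rho> \<subseteq> UNIV - \<Union>(hyps \<Phi>)"
  proof
    fix v assume v: "v \<in> ball a0 \<rho>"
    show "v \<in> UNIV - \<Union>(hyps \<Phi>)"
    proof (rule ccontr)
      assume "v \<notin> UNIV - \<Union>(hyps \<Phi>)"
      then obtain \<beta> k where bk: "\<beta> \<in> \<Phi>" "v \<in> hyp \<beta> k" by (auto simp: memHS)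
      have "a0 \<bullet> \<beta> \<noteq> of_int k" using gen_hyp[OF a0_gen bk(1), of k] by simp
      then show False using r(2) bk v by blast
    qed
  qed
  moreover have "A0 \<inter> ball a0 \<rho> \<noteq> {}" using a0_in r(1) by auto
  ultimately have "ball a0 \<rho> \<subseteq> A0"
    by (rule components_maximal[OF A0_comp connected_ball])
  then show ?thesis using r(1) by blast
qed

definition rep :: "'a set \<Rightarrow> 'a \<times> int" where
  "rep H = (SOME x. fst x \<in> \<Phi> \<and> H = hyp (fst x) (snd x))"

lemma rep: "H \<in> hyps \<Phi> \<Longrightarrow> fst (rep H) \<in> \<Phi> \<and> H = hyp (fst (rep H)) (snd (rep H))"
proof -
  assume "H \<in> hyps \<Phi>"
  then obtain \<beta> k where "\<beta> \<in> \<Phi>" "H = hyp \<beta> k" by (auto simp: memHS)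
  then have "\<exists>x. fst x \<in> \<Phi> \<and> H = hyp (fst x) (snd x)" by (intro exI[of _ "(\<beta>, k)"]) simp
  then show ?thesis unfolding rep_def by (rule someI_ex)
qed

definition fH :: "'a set \<Rightarrow> 'a \<Rightarrow> real" where
  "fH H v = v \<bullet> fst (rep H) - of_int (snd (rep H))"

lemma fH_mem: "H \<in> hyps \<Phi> \<Longrightarrow> v \<in> H \<longleftrightarrow> fH H v = 0"
  using rep[of H] by (auto simp: fH_def hyp_def)

lemma fH_gen: "H \<in> hyps \<Phi> \<Longrightarrow> gen v \<Longrightarrow> fH H v \<noteq> 0"
  using fH_mem by (auto simp: gen_def)

lemma fH_sep: "gen u \<Longrightarrow> gen v \<Longrightarrow> H \<in> sep u v \<Longrightarrow> fH H u * fH H v < 0"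
proof -
  assume u: "gen u" and v: "gen v" and H: "H \<in> sep u v"
  then have Hh: "H \<in> hyps \<Phi>" by (simp add: sep_def)
  have "H = hyp (fst (rep H)) (snd (rep H))" using rep[OF Hh] by simp
  then show ?thesis using sep_hyp[OF u v conjunct1[OF rep[OF Hh]], of "snd (rep H)"] H by (simp add: fH_def)
qed

lemma fH_seg: "fH H ((1 - t) *\<^sub>R c + t *\<^sub>R b) = fH H c + t * (fH H b - fH H c)"
  by (simp add: fH_def inner_add_left algebra_simps)

end


context aw
begin

lemma first_wall:
  assumes gb: "gen b" and ne: "sep a0 b \<noteq> {}"
  shows "\<exists>\<gamma> m. \<gamma> \<in> \<Phi> \<and> wall \<Phi> A0 (hyp \<gamma> m) \<and> hyp \<gamma> m \<in> sep a0 b"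
proof -
  obtain \<rho> where rho: "\<rho> > 0" "ball a0 \<rho> \<subseteq> A0" using ball_A0 by blast
  define S where "S = sep a0 b"
  have fS: "finite S" by (simp add: S_def sep_finite)
  have SH: "S \<subseteq> hyps \<Phi>" by (auto simp: S_def sep_def)
  have Sne: "S \<noteq> {}" using ne by (simp add: S_def)
  define nv where "nv H1 H2 = fH H2 b *\<^sub>R fst (rep H1) - fH H1 b *\<^sub>R fst (rep H2)" for H1 H2
  define dv where "dv H1 H2 = fH H2 b * of_int (snd (rep H1)) - fH H1 b * of_int (snd (rep H2))" for H1 H2
  define T where "T H1 H2 = {c. nv H1 H2 \<bullet> c = dv H1 H2}" for H1 H2
  have T_eq: "nv H1 H2 \<bullet> c - dv H1 H2 = fH H2 b * fH H1 c - fH H1 b * fH H2 c" for H1 H2 c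
    by (simp add: nv_def dv_def fH_def inner_diff_left inner_commute algebra_simps)
  have T_iff: "c \<in> T H1 H2 \<longleftrightarrow> fH H2 b * fH H1 c - fH H1 b * fH H2 c = 0" for H1 H2 c
    using T_eq[of H1 H2 c] by (auto simp: T_def)
  have T_int: "interior (T H1 H2) = {}" if H12: "H1 \<in> S" "H2 \<in> S" "H1 \<noteq> H2" for H1 H2
  proof (cases "nv H1 H2 = 0")
    case False
    then show ?thesis by (simp add: T_def)
  next
    case True
    have "dv H1 H2 \<noteq> 0"
    proof
      assume d: "dv H1 H2 = 0"
      have all: "fH H2 b * fH H1 c - fH H1 b * fH H2 c = 0" for c
        using True d T_iff[of c H1 H2] by (simp add: T_def)
      have h1: "H1 \<in> hyps \<Phi>" and h2: "H2 \<in> hyps \<Phi>" using SH H12 by auto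
      have b1: "fH H1 b \<noteq> 0" "fH H2 b \<noteq> 0" using fH_gen[OF h1 gb] fH_gen[OF h2 gb] by auto
      have "H1 = H2"
      proof (intro equalityI subsetI)
        fix c assume "c \<in> H1"
        then have "fH H1 c = 0" using fH_mem[OF h1] by auto
        then have "fH H2 c = 0" using all[of c] b1 by simp
        then show "c \<in> H2" using fH_mem[OF h2] by auto
      next
        fix c assume "c \<in> H2"
        then have "fH H2 c = 0" using fH_mem[OF h2] by auto
        then have "fH H1 c = 0" using all[of c] b1 by simp
        then show "c \<in> H1" using fH_mem[OF h1] by auto
      qed
      then show False using H12 by simp
    qed
    then have "T H1 H2 = {}" using True by (simp add: T_def)
    then show ?thesis by simp
  qed
  define U where "U = \<Union>((\<lambda>(H1, H2). T H1 H2) ` {(H1, H2). H1 \<in> S \<and> H2 \<in> S \<and> H1 \<noteq> H2})"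
  have iU: "interior U = {}" unfolding U_def
  proof (rule interior_Union_empty)
    have "{(H1, H2). H1 \<in> S \<and> H2 \<in> S \<and> H1 \<noteq> H2} \<subseteq> S \<times> S" by auto
    then have "finite {(H1, H2). H1 \<in> S \<and> H2 \<in> S \<and> H1 \<noteq> H2}" using fS by (rule finite_subset[OF _ finite_SigmaI]) (use fS in auto)
    then show "finite ((\<lambda>(H1, H2). T H1 H2) ` {(H1, H2). H1 \<in> S \<and> H2 \<in> S \<and> H1 \<noteq> H2})" by simp
  next
    fix X assume "X \<in> (\<lambda>(H1, H2). T H1 H2) ` {(H1, H2). H1 \<in> S \<and> H2 \<in> S \<and> H1 \<noteq> H2}"
    then obtain H1 H2 where "H1 \<in> S" "H2 \<in> S" "H1 \<noteq> H2" "X = T H1 H2" by auto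
    then show "closed X" "interior X = {}" using T_int by (auto simp: T_def closed_hyperplane)
  qed
  obtain c where c: "c \<in> ball a0 \<rho>" "c \<notin> U"
  proof -
    have "\<not> ball a0 \<rho> \<subseteq> U"
    proof
      assume "ball a0 \<rho> \<subseteq> U"
      then have "ball a0 \<rho> \<subseteq> interior U" by (rule interior_maximal) simp
      then show False using iU rho(1) by auto
    qed
    then show ?thesis using that by blast
  qed
  have cA: "c \<in> A0" using c rho by blast
  have gc: "gen c" using A0_gen cA .
  have Sc: "sep c b = S"
    using sep_delta[OF gc a0_gen gb] sep_A0[OF cA a0_in] by (simp add: S_def)
  have fcb: "fH H c * fH H b < 0" if "H \<in> S" for H using fH_sep[OF gc gb] Sc that by auto
  define tH where "tH H = fH H c / (fH H c - fH H b)" for H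
  have dnz: "fH H c - fH H b \<noteq> 0" if "H \<in> S" for H using fcb[OF that] by auto
  have tH01: "0 < tH H \<and> tH H < 1" if "H \<in> S" for H
    using fcb[OF that] by (auto simp: tH_def mult_less_0_iff divide_less_eq zero_less_divide_iff)
  have zero_iff: "fH H ((1 - t) *\<^sub>R c + t *\<^sub>R b) = 0 \<longleftrightarrow> t = tH H" if "H \<in> S" for H t
  proof -
    have "fH H ((1 - t) *\<^sub>R c + t *\<^sub>R b) = 0 \<longleftrightarrow> t * (fH H c - fH H b) = fH H c"
      unfolding fH_seg right_diff_distrib by (rule iffI) linarith+
    also have "\<dots> \<longleftrightarrow> t = tH H" using dnz[OF that] by (simp add: tH_def eq_divide_eq)
    finally show ?thesis .
  qed
  have tH_inj: "H1 = H2" if H12: "H1 \<in> S" "H2 \<in> S" "tH H1 = tH H2" for H1 H2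
  proof (rule ccontr)
    assume ne12: "H1 \<noteq> H2"
    then have "c \<notin> T H1 H2" using c(2) H12 by (auto simp: U_def)
    moreover have "fH H1 c * (fH H2 c - fH H2 b) = fH H2 c * (fH H1 c - fH H1 b)"
      using H12(3) dnz[OF H12(1)] dnz[OF H12(2)] by (simp add: tH_def frac_eq_eq)
    then have "fH H2 b * fH H1 c - fH H1 b * fH H2 c = 0" by (simp add: algebra_simps)
    ultimately show False using T_iff by simp
  qed
  define ts where "ts = Min (tH ` S)"
  have "ts \<in> tH ` S" unfolding ts_def using fS Sne by simp
  then obtain Hst where Hst: "Hst \<in> S" "tH Hst = ts" by auto
  have ts_le: "ts \<le> tH H" if "H \<in> S" for H unfolding ts_def using fS that by simp
  have ts_lt: "ts < tH H" if "H \<in> S" "H \<noteq> Hst" for H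
    using ts_le[OF that(1)] tH_inj[OF that(1) Hst(1)] Hst(2) that(2) by force
  have ts01: "0 < ts" "ts < 1" using tH01[OF Hst(1)] Hst(2) by auto
  define z where "z t = (1 - t) *\<^sub>R c + t *\<^sub>R b" for t
  have z_seg: "z t \<in> closed_segment c b" if "0 \<le> t" "t \<le> 1" for t
    using that unfolding in_segment(1) z_def by blast
  have z_notin: "z t \<notin> H" if Ht: "H \<in> hyps \<Phi>" "0 \<le> t" "t < ts" for H t
  proof
    assume zin: "z t \<in> H"
    show False
    proof (cases "H \<in> S")
      case True
      then have "fH H (z t) = 0" using fH_mem[OF Ht(1)] zin by auto
      then have "t = tH H" using zero_iff[OF True] by (simp add: z_def)
      then show False using ts_le[OF True] Ht by simp
    next
      case False
      then have "closed_segment c b \<inter> H = {}" using Sc Ht(1) by (auto simp: sep_def)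
      then show False using z_seg[of t] zin Ht ts01 by auto
    qed
  qed
  define p where "p = z ts"
  have pH: "p \<in> Hst"
  proof -
    have "fH Hst p = 0" using zero_iff[OF Hst(1)] Hst(2) by (simp add: p_def z_def)
    then show ?thesis using fH_mem SH Hst(1) by blast
  qed
  have p_other: "p \<notin> H" if Ht: "H \<in> hyps \<Phi>" "H \<noteq> Hst" for H
  proof
    assume pin: "p \<in> H"
    show False
    proof (cases "H \<in> S")
      case True
      then have "fH H p = 0" using fH_mem[OF Ht(1)] pin by auto
      then have "ts = tH H" using zero_iff[OF True] by (simp add: p_def z_def)
      then show False using ts_lt[OF True Ht(2)] by simp
    next
      case False
      then have "closed_segment c b \<inter> H = {}" using Sc Ht(1) by (auto simp: sep_def)
      then show False using z_seg[of ts] pin ts01 by (auto simp: p_def)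
    qed
  qed
  obtain e where e: "e > 0" "\<forall>\<beta>\<in>\<Phi>. \<forall>k::int. p \<bullet> \<beta> \<noteq> of_int k \<longrightarrow> ball p e \<inter> hyp \<beta> k = {}"
    using LF by blast
  have wall_ball: "\<forall>H'\<in>hyps \<Phi>. H' \<noteq> Hst \<longrightarrow> ball p e \<inter> H' = {}"
  proof (intro ballI impI)
    fix H' assume H': "H' \<in> hyps \<Phi>" "H' \<noteq> Hst"
    then obtain \<beta> k where bk: "\<beta> \<in> \<Phi>" "H' = hyp \<beta> k" by (auto simp: memHS)
    have "p \<bullet> \<beta> \<noteq> of_int k" using p_other[OF H'] bk by (auto simp: hyp_def)
    then show "ball p e \<inter> H' = {}" using e(2) bk by blast
  qed
  have bc: "b \<noteq> c"
  proof
    assume "b = c"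
    then have "S = {}" using Sc sep_refl[OF gc] by simp
    then show False using Sne by simp
  qed
  have cp: "c \<noteq> p"
  proof
    assume "c = p"
    then have "ts *\<^sub>R (b - c) = 0" by (simp add: p_def z_def algebra_simps) (metis eq_commute)
    then show False using ts01 bc by simp
  qed
  have seg_A0: "open_segment c p \<subseteq> A0"
  proof
    fix y assume "y \<in> open_segment c p"
    then obtain u where u: "0 < u" "u < 1" "y = (1 - u) *\<^sub>R c + u *\<^sub>R p" unfolding in_segment(2) by blast
    have yz: "y = z (u * ts)" by (simp add: u(3) p_def z_def algebra_simps)
    have "closed_segment c y \<subseteq> UNIV - \<Union>(hyps \<Phi>)"
    proof
      fix x assume "x \<in> closed_segment c y"
      then obtain v where v: "0 \<le> v" "v \<le> 1" "x = (1 - v) *\<^sub>R c + v *\<^sub>R y" unfolding in_segment(1) by blast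
      have xz: "x = z (v * u * ts)" by (simp add: v(3) yz z_def algebra_simps)
      have vu: "v * u \<le> u" using v u by (simp add: mult_left_le_one_le)
      have "0 \<le> v * u * ts" using v u ts01 by simp
      moreover have vu1: "v * u < 1" using vu u(2) by linarith
      moreover have "v * u * ts < ts" using vu1 ts01 by (simp add: mult_less_cancel_right2)
      ultimately show "x \<in> UNIV - \<Union>(hyps \<Phi>)" using z_notin xz by blast
    qed
    moreover have "A0 \<inter> closed_segment c y \<noteq> {}" using cA by auto
    ultimately have "closed_segment c y \<subseteq> A0" by (rule components_maximal[OF A0_comp connected_segment])
    then show "y \<in> A0" by auto
  qed
  have pcl: "p \<in> closure A0"
  proof -
    have "p \<in> closure (open_segment c p)" using cp by simp
    then show ?thesis using closure_mono[OF seg_A0] by blast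
  qed
  have HstH: "Hst \<in> hyps \<Phi>" using SH Hst(1) by blast
  have gm: "fst (rep Hst) \<in> \<Phi>" "Hst = hyp (fst (rep Hst)) (snd (rep Hst))" using rep[OF HstH] by auto
  have "wall \<Phi> A0 Hst" unfolding wall_def using HstH pH pcl e(1) wall_ball by blast
  then have w: "wall \<Phi> A0 (hyp (fst (rep Hst)) (snd (rep Hst)))" using gm(2) by simp
  have m: "hyp (fst (rep Hst)) (snd (rep Hst)) \<in> sep a0 b" using Hst(1) gm(2) by (simp add: S_def)
  show ?thesis by (intro exI conjI, rule gm(1), rule w, rule m)
qed

end


context aw
begin

lemma refl_self_prod:
  assumes b: "\<beta> \<in> \<Phi>" and g: "gen v"
  shows "(v \<bullet> \<beta> - of_int k) * (aff_refl \<beta> k v \<bullet> \<beta> - of_int k) < 0"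
proof -
  have "(v \<bullet> \<beta> - of_int k) \<noteq> 0" using gen_hyp[OF g b] .
  then have "(v \<bullet> \<beta> - of_int k) * (v \<bullet> \<beta> - of_int k) > 0" by (auto simp: zero_less_mult_iff linorder_neq_iff)
  then show ?thesis using refl_prod_neg[OF nz[OF b], of v k] by simp
qed

lemma N_refl_mem: "\<beta> \<in> \<Phi> \<Longrightarrow> hyp \<beta> k \<in> N (aff_refl \<beta> k)"
  unfolding N_def
  using sep_hyp[OF a0_gen affW_gen[OF refl_affW1 a0_gen]] refl_self_prod[OF _ a0_gen] by blast

lemma N_refl_inv: assumes b: "\<beta> \<in> \<Phi>" shows "himg (aff_refl \<beta> k) (N (aff_refl \<beta> k)) = N (aff_refl \<beta> k)"
proof -
  have "himg (aff_refl \<beta> k) (N (aff_refl \<beta> k)) = sep (aff_refl \<beta> k a0) (aff_refl \<beta> k (aff_refl \<beta> k a0))"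
    unfolding N_def by (rule affW_sep[OF refl_affW1[OF b], symmetric])
  also have "\<dots> = N (aff_refl \<beta> k)" by (simp add: aff_refl_invol[OF nz[OF b]] N_def sep_sym)
  finally show ?thesis .
qed

lemma rh_ne:
  assumes b: "\<beta> \<in> \<Phi>" and g: "\<gamma> \<in> \<Phi>" and ne: "hyp \<gamma> m \<noteq> hyp \<beta> k" and mem: "hyp \<gamma> m \<in> N (aff_refl \<beta> k)"
  shows "aff_refl \<beta> k ` hyp \<gamma> m \<noteq> hyp \<gamma> m"
proof
  assume eq: "aff_refl \<beta> k ` hyp \<gamma> m = hyp \<gamma> m"
  show False
  proof (cases "\<beta> \<bullet> \<gamma> = 0")
    case True
    have "aff_refl \<beta> k a0 \<bullet> \<gamma> = a0 \<bullet> \<gamma>" using True by (simp add: aff_refl_inner)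
    moreover have "(a0 \<bullet> \<gamma> - of_int m) * (aff_refl \<beta> k a0 \<bullet> \<gamma> - of_int m) < 0"
      using mem sep_hyp[OF a0_gen affW_gen[OF refl_affW1[OF b] a0_gen] g] by (simp add: N_def)
    ultimately show False by (simp add: mult_less_0_iff)
  next
    case False
    have q: "\<beta> \<bullet> \<beta> \<noteq> 0" using nz[OF b] by simp
    have "hyp \<gamma> m \<subseteq> hyp \<beta> k"
    proof
      fix v assume v: "v \<in> hyp \<gamma> m"
      then have "aff_refl \<beta> k v \<in> hyp \<gamma> m" using eq by blast
      then have "aff_refl \<beta> k v \<bullet> \<gamma> = of_int m" "v \<bullet> \<gamma> = of_int m" using v by (auto simp: hyp_def)
      then have "(2 * (v \<bullet> \<beta> - of_int k) / (\<beta> \<bullet> \<beta>)) * (\<beta> \<bullet> \<gamma>) = 0" by (simp add: aff_refl_inner)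
      then have "v \<bullet> \<beta> - of_int k = 0" using False q by simp
      then show "v \<in> hyp \<beta> k" by (simp add: hyp_def)
    qed
    then have "hyp \<gamma> m = hyp \<beta> k" by (rule hyp_subset_eq[OF nz[OF g] nz[OF b]])
    then show False using ne by simp
  qed
qed


lemma gen_word_aux:
  "\<forall>\<beta> k. \<beta> \<in> \<Phi> \<longrightarrow> card (N (aff_refl \<beta> k)) = n \<longrightarrow> (\<exists>ws. word ws \<and> ev ws = aff_refl \<beta> k)"
proof (induction n rule: less_induct)
  case (less n)
  show ?case
  proof (intro allI impI)
    fix \<beta> k assume b: "\<beta> \<in> \<Phi>" and cn: "card (N (aff_refl \<beta> k)) = n"
    define r where "r = aff_refl \<beta> k"
    define X where "X = N r"
    have rW: "r \<in> affW \<Phi>" using refl_affW1[OF b] by (simp add: r_def)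
    have HX: "hyp \<beta> k \<in> X" using N_refl_mem[OF b] by (simp add: X_def r_def)
    have gr: "gen (r a0)" using affW_gen[OF rW a0_gen] .
    obtain \<gamma> m where gm: "\<gamma> \<in> \<Phi>" "wall \<Phi> A0 (hyp \<gamma> m)" "hyp \<gamma> m \<in> X"
      using first_wall[OF gr] HX by (auto simp: X_def N_def)
    define s where "s = aff_refl \<gamma> m"
    define h where "h = hyp \<gamma> m"
    have sS: "s \<in> simple_refls \<Phi> A0" using gm by (auto simp: simple_refls_def s_def)
    show "\<exists>ws. word ws \<and> ev ws = aff_refl \<beta> k"
    proof (cases "h = hyp \<beta> k")
      case True
      then have "s = aff_refl \<beta> k" unfolding s_def h_def by (rule hyp_eq_refl[OF nz[OF gm(1)] nz[OF b]])
      then show ?thesis using sS by (intro exI[of _ "[s]"]) simp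
    next
      case False
      obtain \<beta>' k' where bk': "\<beta>' \<in> \<Phi>" "s \<circ> r \<circ> s = aff_refl \<beta>' k'"
        using gen_conj[OF gm(1) b, of m k] by (auto simp: s_def r_def)
      have Hs: "Hs s = h" using Hs_refl[OF gm(1)] by (simp add: s_def h_def)
      have rsW: "r \<circ> s \<in> affW \<Phi>" using refl_affW[OF b simple_affW1[OF sS]] by (simp add: r_def)
      have N1: "N (r \<circ> s) = symd X {r ` h}" using N_right[OF sS rW] Hs by (simp add: X_def)
      have N2: "N (s \<circ> (r \<circ> s)) = symd {h} (himg s (N (r \<circ> s)))" using N_left[OF sS rsW] Hs by simp
      have hX: "h \<in> X" using gm(3) by (simp add: h_def)
      have rhX: "r ` h \<in> X"
      proof -
        have "r ` h \<in> himg r X" using hX by (simp add: himg_def)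
        then show ?thesis using N_refl_inv[OF b] by (simp add: X_def r_def)
      qed
      have rhh: "r ` h \<noteq> h" using rh_ne[OF b gm(1) _ gm(3)[unfolded X_def r_def]] False
        by (simp add: r_def h_def)
      have sinv: "s (s v) = v" for v using simple_invol[OF sS] .
      have injs: "inj s" by (rule inj_on_inverseI[where g = s]) (simp add: sinv)
      have sh: "s ` h = h"
      proof -
        have "\<forall>v\<in>h. s v = v" using Hs by (auto simp: Hs_def)
        then show ?thesis by (simp add: image_cong)
      qed
      have shr: "s ` (r ` h) \<noteq> h"
      proof
        assume "s ` (r ` h) = h"
        then have "s ` (s ` (r ` h)) = s ` h" by simp
        moreover have "s ` (s ` (r ` h)) = r ` h" by (simp add: image_image sinv)
        ultimately have "r ` h = h" using sh by simp
        then show False using rhh by simp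
      qed
      have fX: "finite X" by (simp add: X_def N_finite)
      define Y where "Y = himg s (X - {r ` h})"
      have fY: "finite Y" using fX by (simp add: Y_def himg_def)
      have hY: "h \<in> Y"
      proof -
        have "h \<in> X - {r ` h}" using hX rhh by auto
        then have "s ` h \<in> (\<lambda>H. s ` H) ` (X - {r ` h})" by (rule imageI)
        then show ?thesis using sh by (simp add: Y_def himg_def)
      qed
      have sub: "N (s \<circ> (r \<circ> s)) \<subseteq> Y - {h}"
      proof -
        have e1: "symd X {r ` h} = X - {r ` h}" using rhX by (auto simp: symd_def)
        show ?thesis unfolding N2 N1 e1 Y_def[symmetric] using hY by (auto simp: symd_def)
      qed
      have c1: "card (N (s \<circ> (r \<circ> s))) \<le> card (Y - {h})" by (rule card_mono[OF _ sub]) (simp add: fY)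
      have c2: "card (Y - {h}) = card Y - 1" by (rule card_Diff_singleton[OF hY])
      have c3: "card Y \<le> card (X - {r ` h})" unfolding Y_def himg_def by (rule card_image_le) (simp add: fX)
      have c4: "card (X - {r ` h}) = card X - 1" by (rule card_Diff_singleton[OF rhX])
      have c5: "card X > 0" using hX fX card_gt_0_iff by blast
      have "card (N (s \<circ> (r \<circ> s))) < card X" using c1 c2 c3 c4 c5 by linarith
      moreover have "s \<circ> (r \<circ> s) = aff_refl \<beta>' k'" using bk'(2) by (simp add: comp_assoc)
      ultimately have lt: "card (N (aff_refl \<beta>' k')) < n" using cn by (simp add: X_def r_def)
      obtain ws' where ws': "word ws'" "ev ws' = aff_refl \<beta>' k'" using less.IH[OF lt] bk'(1) by blast
      have pt: "aff_refl \<beta>' k' v = s (r (s v))" for v using bk'(2) by (metis comp_apply)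
      have "aff_refl \<beta> k = s \<circ> aff_refl \<beta>' k' \<circ> s" by (simp add: fun_eq_iff pt sinv r_def)
      then have "ev (s # ws' @ [s]) = aff_refl \<beta> k" using ws'(2) by (simp add: comp_assoc)
      moreover have "word (s # ws' @ [s])" using sS ws'(1) by simp
      ultimately show ?thesis by blast
    qed
  qed
qed

lemma gen_word: "\<beta> \<in> \<Phi> \<Longrightarrow> \<exists>ws. word ws \<and> ev ws = aff_refl \<beta> k"
  using gen_word_aux by blast

lemma has_word: "w \<in> affW \<Phi> \<Longrightarrow> \<exists>ws. word ws \<and> ev ws = w"
proof (induction rule: affW.induct)
  case affW_id
  then show ?case by (intro exI[of _ "[]"]) simp
next
  case (affW_step w \<beta> k)
  obtain ws where ws: "word ws" "ev ws = w" using affW_step.IH by blast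
  obtain ws1 where ws1: "word ws1" "ev ws1 = aff_refl \<beta> k" using gen_word[OF affW_step.hyps(2)] by blast
  show ?case using ws ws1 by (intro exI[of _ "ws1 @ ws"]) simp
qed

lemma len_alt: "len \<Phi> A0 w = (LEAST n. \<exists>ws. length ws = n \<and> word ws \<and> ev ws = w)"
  by (simp add: len_def word_def ev_def)

lemma len_word: "w \<in> affW \<Phi> \<Longrightarrow> \<exists>ws. word ws \<and> ev ws = w \<and> length ws = len \<Phi> A0 w"
proof -
  assume "w \<in> affW \<Phi>"
  then obtain ws where "word ws" "ev ws = w" using has_word by blast
  then have "\<exists>n. \<exists>ws. length ws = n \<and> word ws \<and> ev ws = w" by blast
  from LeastI_ex[OF this] show ?thesis unfolding len_alt by blast
qed

lemma len_le: "word ws \<Longrightarrow> len \<Phi> A0 (ev ws) \<le> length ws"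
  unfolding len_alt by (rule Least_le) blast

lemma crit_lt:
  assumes w: "w \<in> affW \<Phi>" and b: "\<beta> \<in> \<Phi>" and h: "hyp \<beta> k \<in> N w"
  shows "len \<Phi> A0 (aff_refl \<beta> k \<circ> w) < len \<Phi> A0 w"
proof -
  obtain ws where ws: "word ws" "ev ws = w" "length ws = len \<Phi> A0 w" using len_word[OF w] by blast
  have "hyp \<beta> k \<in> wspan ws" using N_span[OF ws(1)] h ws(2) by blast
  then obtain ws' where ws': "word ws'" "length ws' < length ws" "ev ws' = aff_refl \<beta> k \<circ> ev ws"
    using deletion[OF ws(1) b] by blast
  have "len \<Phi> A0 (aff_refl \<beta> k \<circ> w) \<le> length ws'" using len_le[OF ws'(1)] ws'(3) ws(2) by simp
  then show ?thesis using ws'(2) ws(3) by simp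
qed

lemma crit:
  assumes w: "w \<in> affW \<Phi>" and b: "\<beta> \<in> \<Phi>"
  shows "len \<Phi> A0 w < len \<Phi> A0 (aff_refl \<beta> k \<circ> w) \<longleftrightarrow>
    \<not> ((a0 \<bullet> \<beta> - of_int k) * (w a0 \<bullet> \<beta> - of_int k) < 0)"
proof -
  have gw: "gen (w a0)" using affW_gen[OF w a0_gen] .
  have memN: "hyp \<beta> k \<in> N w \<longleftrightarrow> (a0 \<bullet> \<beta> - of_int k) * (w a0 \<bullet> \<beta> - of_int k) < 0"
    unfolding N_def by (rule sep_hyp[OF a0_gen gw b])
  show ?thesis
  proof
    assume "len \<Phi> A0 w < len \<Phi> A0 (aff_refl \<beta> k \<circ> w)"
    then have "hyp \<beta> k \<notin> N w" using crit_lt[OF w b] by fastforce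
    then show "\<not> ((a0 \<bullet> \<beta> - of_int k) * (w a0 \<bullet> \<beta> - of_int k) < 0)" using memN by simp
  next
    assume nl: "\<not> ((a0 \<bullet> \<beta> - of_int k) * (w a0 \<bullet> \<beta> - of_int k) < 0)"
    let ?r = "aff_refl \<beta> k"
    have rw: "?r \<circ> w \<in> affW \<Phi>" by (rule refl_affW[OF b w])
    have grw: "gen (?r (w a0))" using affW_gen[OF rw a0_gen] by simp
    have n1: "a0 \<bullet> \<beta> - of_int k \<noteq> 0" "w a0 \<bullet> \<beta> - of_int k \<noteq> 0" using gen_hyp[OF a0_gen b] gen_hyp[OF gw b] by auto
    have pos: "(a0 \<bullet> \<beta> - of_int k) * (w a0 \<bullet> \<beta> - of_int k) > 0"
      using nl n1 by (auto simp: zero_less_mult_iff mult_less_0_iff linorder_neq_iff)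
    have "(a0 \<bullet> \<beta> - of_int k) * (?r (w a0) \<bullet> \<beta> - of_int k) < 0"
      using pos by (simp only: aff_refl_self[OF nz[OF b]] mult_minus_right neg_less_0_iff_less)
    then have "hyp \<beta> k \<in> N (?r \<circ> w)" unfolding N_def using sep_hyp[OF a0_gen grw b] by simp
    then have "len \<Phi> A0 (?r \<circ> (?r \<circ> w)) < len \<Phi> A0 (?r \<circ> w)" by (rule crit_lt[OF rw b])
    moreover have "?r \<circ> (?r \<circ> w) = w" by (simp add: fun_eq_iff aff_refl_invol[OF nz[OF b]])
    ultimately show "len \<Phi> A0 w < len \<Phi> A0 (?r \<circ> w)" by simp
  qed
qed

end


lemma core_arith:
  fixes A X C :: real
  assumes h1: "\<not> ((A - (C + 1)) * (X - (C + 1)) < 0)"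
    and h2: "\<not> ((A - (C + 2)) * ((2 * (C + 1) - X) - (C + 2)) < 0)"
    and h3: "\<not> ((A - (C + 3)) * ((X + 2) - (C + 3)) < 0)"
    and n1: "X \<noteq> C" "X \<noteq> C + 1" "A \<noteq> C + 1"
  shows "A - C < 1 \<and> 0 < X - C \<and> X - C < 1"
  using assms unfolding mult_less_0_iff by smt

lemma aff_refl_alpha: "\<alpha> \<noteq> 0 \<Longrightarrow> aff_refl \<alpha> m v \<bullet> \<alpha> = 2 * of_int m - v \<bullet> \<alpha>"
  using aff_refl_self[of \<alpha> m v] by simp

lemma refl_chain_affW:
  "x \<in> affW \<Phi> \<Longrightarrow> \<alpha> \<in> \<Phi> \<Longrightarrow> refl_chain \<alpha> c t x \<in> affW \<Phi>"
  by (induction t) (simp_all add: affW_step)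

theorem proposition4p3:
  fixes \<Phi> :: "'a::euclidean_space set" and A0 :: "'a set"
    and x :: "'a \<Rightarrow> 'a" and n :: nat and \<alpha> :: 'a and c :: int
  assumes "crystallographic_root_system \<Phi>"
    and "alcove \<Phi> A0"
    and "x \<in> affW \<Phi>"
    and "n \<ge> 3"
    and "\<alpha> \<in> \<Phi>"
    and "\<forall>t\<in>{1..n}. len \<Phi> A0 (refl_chain \<alpha> c t x) > len \<Phi> A0 (refl_chain \<alpha> c (t - 1) x)"
  shows "\<forall>t\<in>{1..n}. len \<Phi> A0 (aff_refl \<alpha> (c + int t) \<circ> x) > len \<Phi> A0 x"
proof -
  interpret aw \<Phi> A0 using assms(1,2) by unfold_locales
  have aN: "\<alpha> \<noteq> 0" using nz[OF assms(5)] .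
  have yW: "refl_chain \<alpha> c t x \<in> affW \<Phi>" for t using refl_chain_affW[OF assms(3) assms(5)] .
  define A where "A = a0 \<bullet> \<alpha>"
  define X where "X = x a0 \<bullet> \<alpha>"
  have H: "\<not> ((A - of_int (c + int t)) * (refl_chain \<alpha> c (t - 1) x a0 \<bullet> \<alpha> - of_int (c + int t)) < 0)"
    if t: "t \<in> {1..n}" for t
  proof -
    obtain t' where ts: "t = Suc t'" using t by (cases t) auto
    have e: "refl_chain \<alpha> c t x = aff_refl \<alpha> (c + int t) \<circ> refl_chain \<alpha> c (t - 1) x"
      unfolding ts by simp
    have "len \<Phi> A0 (refl_chain \<alpha> c (t - 1) x) < len \<Phi> A0 (refl_chain \<alpha> c t x)"
      using assms(6) t by blast
    then have "len \<Phi> A0 (refl_chain \<alpha> c (t - 1) x) < len \<Phi> A0 (aff_refl \<alpha> (c + int t) \<circ> refl_chain \<alpha> c (t - 1) x)"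
      by (simp only: e)
    then show ?thesis using crit[OF yW assms(5)] by (simp add: A_def)
  qed
  have y1: "refl_chain \<alpha> c 1 x a0 \<bullet> \<alpha> = 2 * (of_int c + 1) - X"
    using aff_refl_alpha[OF aN] by (simp add: X_def)
  have y2: "refl_chain \<alpha> c 2 x a0 \<bullet> \<alpha> = X + 2"
    using aff_refl_alpha[OF aN] by (simp add: X_def numeral_2_eq_2)
  have in123: "1 \<in> {1..n}" "2 \<in> {1..n}" "3 \<in> {1..n}" using assms(4) by auto
  have h1: "\<not> ((A - (of_int c + 1)) * (X - (of_int c + 1)) < 0)"
    using H[OF in123(1)] by (simp add: X_def)
  have h2: "\<not> ((A - (of_int c + 2)) * ((2 * (of_int c + 1) - X) - (of_int c + 2)) < 0)"
    using H[OF in123(2)] y1 by simp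
  have h3: "\<not> ((A - (of_int c + 3)) * ((X + 2) - (of_int c + 3)) < 0)"
  proof -
    have "refl_chain \<alpha> c (3 - 1) x a0 \<bullet> \<alpha> = X + 2" using y2 by simp
    then show ?thesis using H[OF in123(3)] by simp
  qed
  have gx: "gen (x a0)" using affW_gen[OF assms(3) a0_gen] .
  have n1: "X \<noteq> of_int c" using gen_hyp[OF gx assms(5), of c] by (simp add: X_def)
  have n2: "X \<noteq> of_int c + 1" using gen_hyp[OF gx assms(5), of "c + 1"] by (simp add: X_def)
  have n3: "A \<noteq> of_int c + 1" using gen_hyp[OF a0_gen assms(5), of "c + 1"] by (simp add: A_def)
  have core: "A - of_int c < 1 \<and> 0 < X - of_int c \<and> X - of_int c < 1"
    by (rule core_arith[OF h1 h2 h3 n1 n2 n3])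
  show ?thesis
  proof
    fix t assume t: "t \<in> {1..n}"
    have "A - of_int (c + int t) < 0" "X - of_int (c + int t) < 0" using core t by auto
    then have "\<not> ((a0 \<bullet> \<alpha> - of_int (c + int t)) * (x a0 \<bullet> \<alpha> - of_int (c + int t)) < 0)"
      unfolding A_def X_def by (simp add: mult_less_0_iff)
    then show "len \<Phi> A0 (aff_refl \<alpha> (c + int t) \<circ> x) > len \<Phi> A0 x"
      using crit[OF assms(3) assms(5)] by simp
  qed
qed

end
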